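(* Fix $\Sigma\in\mathcal{Q}^+_{m,n}$, indices $h,j\in\mathcal{V}_1$ with $h\ge j$, and numbers $\gamma_{kl}\ge0$ for $k,l\in\mathcal{V}_2$, $k\ge l$. Consider $$\min_{\lambda_{hj}\ge0}\ \sum_{k\ge l}\Big[\max\{\lambda_{hj},\gamma_{kl}\}q_{hk,jl}(\Sigma)-\alpha_{hk,jl}\log\max\{\lambda_{hj},\gamma_{kl}\}\Big]+\varepsilon\lambda_{hj}.$$ Let $\tilde\gamma_1<\tilde\gamma_2<\dots<\tilde\gamma_{\tilde u_2}$ ($\tilde u_2\le m_2(m_2+1)/2$) be the distinct values among $\{\gamma_{kl}:k\ge l\}$ in increasing order, and define $\mathcal{C}_u=\{(k,l):k\ge l,\ \gamma_{kl}\le\tilde\gamma_u\}$, $\mathcal{N}_1=\{\tilde\gamma_u:u=1,\dots,\tilde u_2\}$, $\mathcal{N}_2=\{\tilde\lambda_{hj,u}:u=0,1,\dots,\tilde u_2\}$, where $\tilde\lambda_{hj,0}=0$ and, for $u>0$, $$\tilde\lambda_{hj,u}=\frac{\sum_{(k,l)\in\mathcal{C}_u}\alpha_{hk,jl}}{\sum_{(k,l)\in\mathcal{C}_u}q_{hk,jl}(\Sigma)+\varepsilon}.$$ Then this problem admits a solution and all its points of minimum lie in $\mathcal{M}_1=\mathcal{N}_1\cup\mathcal{N}_2$.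
   Context: Let $m_1,m_2,n\in\mathbb{N}$, $m=m_1m_2$, $\mathcal{V}_1=\{1,\dots,m_1\}$, $\mathcal{V}_2=\{1,\dots,m_2\}$, $\varepsilon>0$. $\mathcal{Q}^+_{m,n}$ is the set of matrix pseudo-polynomials $\Sigma(e^{i\vartheta})=S_0+\frac12\sum_{t=1}^n[S_te^{-it\vartheta}+S_t^Te^{it\vartheta}]$ ($S_0=S_0^T$, $S_t\in\mathbb{R}^{m\times m}$) with $\Sigma(e^{i\vartheta})\succ0$ for all $\vartheta\in[-\pi,\pi]$. For $M\in\mathbb{R}^{m\times m}$, $(M)_{hk,jl}$ is the entry in row $(h-1)m_2+k$ and column $(j-1)m_2+l$. $q_{hk,jl}(\Sigma)=\max_{t=0,\dots,n}\max\{|(S_t)_{hk,jl}|,|(S_t)_{hl,jk}|,|(S_t)_{jl,hk}|,|(S_t)_{jk,hl}|\}$. For $h\ge j$, $k\ge l$: $\alpha_{hk,jl}=n+1$ if $h=j,k=l$; $2n+1$ if $h=j,k>l$ or $h>j,k=l$; $4n+2$ if $h>j,k>l$. The objective is taken to be $+\infty$ if some logarithm has argument $0$. *)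

theory Defs
  imports "HOL-Analysis.Analysis"
begin

text \<open>Matrices in R^{m x m} are represented as functions nat => nat => real,
  with rows and columns indexed 1..m (entries outside are irrelevant).
  A matrix pseudo-polynomial is given by its coefficient family S t, t = 0..n.\<close>

definition pp_eval :: "nat \<Rightarrow> (nat \<Rightarrow> nat \<Rightarrow> nat \<Rightarrow> real) \<Rightarrow> real \<Rightarrow> nat \<Rightarrow> nat \<Rightarrow> complex" where
  "pp_eval n S \<theta> a b =
     complex_of_real (S 0 a b) + (1/2) * (\<Sum>t=1..n.
        complex_of_real (S t a b) * exp (- \<i> * of_nat t * of_real \<theta>)
      + complex_of_real (S t b a) * exp (\<i> * of_nat t * of_real \<theta>))"

definition cpos_def :: "nat \<Rightarrow> (nat \<Rightarrow> nat \<Rightarrow> complex) \<Rightarrow> bool" where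
  "cpos_def m A \<longleftrightarrow>
     (\<forall>a\<in>{1..m}. \<forall>b\<in>{1..m}. A a b = cnj (A b a)) \<and>
     (\<forall>z :: nat \<Rightarrow> complex. (\<exists>a\<in>{1..m}. z a \<noteq> 0) \<longrightarrow>
        Re (\<Sum>a=1..m. \<Sum>b=1..m. cnj (z a) * A a b * z b) > 0)"

definition in_Qplus :: "nat \<Rightarrow> nat \<Rightarrow> (nat \<Rightarrow> nat \<Rightarrow> nat \<Rightarrow> real) \<Rightarrow> bool" where
  "in_Qplus m n S \<longleftrightarrow>
     (\<forall>a\<in>{1..m}. \<forall>b\<in>{1..m}. S 0 a b = S 0 b a) \<and>
     (\<forall>\<theta>\<in>{-pi..pi}. cpos_def m (pp_eval n S \<theta>))"

definition blk :: "nat \<Rightarrow> (nat \<Rightarrow> nat \<Rightarrow> real) \<Rightarrow> nat \<Rightarrow> nat \<Rightarrow> nat \<Rightarrow> nat \<Rightarrow> real" where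
  "blk m2 M h k j l = M ((h - 1) * m2 + k) ((j - 1) * m2 + l)"

definition qf :: "nat \<Rightarrow> nat \<Rightarrow> (nat \<Rightarrow> nat \<Rightarrow> nat \<Rightarrow> real) \<Rightarrow> nat \<Rightarrow> nat \<Rightarrow> nat \<Rightarrow> nat \<Rightarrow> real" where
  "qf m2 n S h k j l = Max ((\<lambda>t. max (max \<bar>blk m2 (S t) h k j l\<bar> \<bar>blk m2 (S t) h l j k\<bar>)
                                      (max \<bar>blk m2 (S t) j l h k\<bar> \<bar>blk m2 (S t) j k h l\<bar>)) ` {0..n})"

text \<open>alpha_{hk,jl}, for h >= j and k >= l.\<close>
definition alpha :: "nat \<Rightarrow> nat \<Rightarrow> nat \<Rightarrow> nat \<Rightarrow> nat \<Rightarrow> real" where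
  "alpha n h k j l =
     (if h = j \<and> k = l then real n + 1
      else if (h = j \<and> k > l) \<or> (h > j \<and> k = l) then 2 * real n + 1
      else 4 * real n + 2)"

definition pairs :: "nat \<Rightarrow> (nat \<times> nat) set" where
  "pairs m2 = {(k, l). l \<in> {1..m2} \<and> k \<in> {1..m2} \<and> k \<ge> l}"

text \<open>The objective; +infinity if some logarithm has argument 0.\<close>
definition obj :: "nat \<Rightarrow> nat \<Rightarrow> (nat \<Rightarrow> nat \<Rightarrow> nat \<Rightarrow> real) \<Rightarrow> nat \<Rightarrow> nat \<Rightarrow>
                   (nat \<Rightarrow> nat \<Rightarrow> real) \<Rightarrow> real \<Rightarrow> real \<Rightarrow> ereal" where
  "obj m2 n S h j \<gamma> \<epsilon> lam =
     (if \<exists>(k, l)\<in>pairs m2. max lam (\<gamma> k l) = 0 then \<infinity>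
      else ereal ((\<Sum>(k, l)\<in>pairs m2.
              max lam (\<gamma> k l) * qf m2 n S h k j l - alpha n h k j l * ln (max lam (\<gamma> k l)))
            + \<epsilon> * lam))"

text \<open>C_u for the threshold value g = tilde-gamma_u, and the corresponding tilde-lambda.\<close>
definition Cset :: "nat \<Rightarrow> (nat \<Rightarrow> nat \<Rightarrow> real) \<Rightarrow> real \<Rightarrow> (nat \<times> nat) set" where
  "Cset m2 \<gamma> g = {(k, l) \<in> pairs m2. \<gamma> k l \<le> g}"

definition lam_tilde :: "nat \<Rightarrow> nat \<Rightarrow> (nat \<Rightarrow> nat \<Rightarrow> nat \<Rightarrow> real) \<Rightarrow> nat \<Rightarrow> nat \<Rightarrow>
                         (nat \<Rightarrow> nat \<Rightarrow> real) \<Rightarrow> real \<Rightarrow> real \<Rightarrow> real" where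
  "lam_tilde m2 n S h j \<gamma> \<epsilon> g =
     (\<Sum>(k, l)\<in>Cset m2 \<gamma> g. alpha n h k j l) /
     ((\<Sum>(k, l)\<in>Cset m2 \<gamma> g. qf m2 n S h k j l) + \<epsilon>)"

definition N1 :: "nat \<Rightarrow> (nat \<Rightarrow> nat \<Rightarrow> real) \<Rightarrow> real set" where
  "N1 m2 \<gamma> = (\<lambda>(k, l). \<gamma> k l) ` pairs m2"

definition N2 :: "nat \<Rightarrow> nat \<Rightarrow> (nat \<Rightarrow> nat \<Rightarrow> nat \<Rightarrow> real) \<Rightarrow> nat \<Rightarrow> nat \<Rightarrow>
                  (nat \<Rightarrow> nat \<Rightarrow> real) \<Rightarrow> real \<Rightarrow> real set" where
  "N2 m2 n S h j \<gamma> \<epsilon> = insert 0 (lam_tilde m2 n S h j \<gamma> \<epsilon> ` N1 m2 \<gamma>)"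

definition is_minimizer :: "(real \<Rightarrow> ereal) \<Rightarrow> real \<Rightarrow> bool" where
  "is_minimizer f x \<longleftrightarrow> x \<ge> 0 \<and> (\<forall>y\<ge>0. f x \<le> f y)"

end

theory Submission imports Defs begin
lemma core:
  fixes A B y z :: real
  assumes A: "A > 0" and B: "B > 0" and y: "y > 0" and z: "z > 0"
    and btw: "(B/A \<le> z \<and> z \<le> y) \<or> (y \<le> z \<and> z \<le> B/A)"
  shows "A*z - B*ln z \<le> A*y - B*ln y" and "z \<noteq> y \<Longrightarrow> A*z - B*ln z < A*y - B*ln y"
proof -
  have key: "(y - z) * (A*z - B) \<ge> 0"
  proof -
    have "B/A \<le> z \<longleftrightarrow> B \<le> A*z" using A by (simp add: field_simps)
    moreover have "z \<le> B/A \<longleftrightarrow> A*z \<le> B" using A by (simp add: field_simps)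
    ultimately show ?thesis using btw by (auto intro: mult_nonneg_nonneg mult_nonpos_nonpos)
  qed
  have lnq: "ln y - ln z = ln (y/z)" using y z by (simp add: ln_div)
  have l1: "ln (y/z) \<le> y/z - 1" using y z by (intro ln_le_minus_one) simp
  have eq: "A*y - B*ln y - (A*z - B*ln z) = A*(y-z) - B*ln(y/z)" using lnq by (simp add: algebra_simps)
  have "A*(y-z) - B*(y/z - 1) = (y - z) * (A*z - B) / z" using z by (simp add: field_simps)
  hence ge: "A*(y-z) - B*(y/z - 1) \<ge> 0" using key z by simp
  have "A*(y-z) - B*ln(y/z) \<ge> A*(y-z) - B*(y/z - 1)" using l1 B by (simp add: mult_left_mono)
  then show "A*z - B*ln z \<le> A*y - B*ln y" using eq ge by linarith
  assume ne: "z \<noteq> y"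
  have "ln (y/z) \<noteq> y/z - 1"
  proof
    assume "ln (y/z) = y/z - 1"
    hence "y/z = 1" using y z ln_eq_minus_one by (metis divide_pos_pos)
    thus False using ne z by simp
  qed
  hence "ln (y/z) < y/z - 1" using l1 by simp
  hence "A*(y-z) - B*ln(y/z) > A*(y-z) - B*(y/z - 1)" using B by simp
  then show "A*z - B*ln z < A*y - B*ln y" using eq ge by linarith
qed

context
  fixes P :: "'a set" and G Q Aa :: "'a \<Rightarrow> real" and \<epsilon> :: real
    and f :: "real \<Rightarrow> ereal" and lt :: "real \<Rightarrow> real" and M :: "real set"
  assumes finP: "finite P" and Gnn: "\<And>x. x \<in> P \<Longrightarrow> G x \<ge> 0"
    and Qnn: "\<And>x. x \<in> P \<Longrightarrow> Q x \<ge> 0" and Apos: "\<And>x. x \<in> P \<Longrightarrow> Aa x > 0"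
    and eps: "\<epsilon> > 0"
    and f_def: "\<And>lam. f lam = (if \<exists>x\<in>P. max lam (G x) = 0 then \<infinity>
        else ereal ((\<Sum>x\<in>P. max lam (G x) * Q x - Aa x * ln (max lam (G x))) + \<epsilon> * lam))"
    and lt_def: "\<And>g. lt g = (\<Sum>x\<in>{x\<in>P. G x \<le> g}. Aa x) / ((\<Sum>x\<in>{x\<in>P. G x \<le> g}. Q x) + \<epsilon>)"
    and M_def: "M = G ` P \<union> insert 0 (lt ` G ` P)"
begin

lemma formula:
  fixes y lam :: real
  defines "C \<equiv> {x\<in>P. G x \<le> y}" and "D \<equiv> {x\<in>P. \<not> G x \<le> y}"
  assumes lpos: "lam > 0" and y0: "y \<ge> 0"
    and iC: "\<And>x. x \<in> C \<Longrightarrow> G x \<le> lam" and iD: "\<And>x. x \<in> D \<Longrightarrow> lam \<le> G x"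
  shows "f lam = ereal (((\<Sum>x\<in>C. Q x) + \<epsilon>) * lam - (\<Sum>x\<in>C. Aa x) * ln lam
     + (\<Sum>x\<in>D. G x * Q x - Aa x * ln (G x)))"
proof -
  have nz: "\<not> (\<exists>x\<in>P. max lam (G x) = 0)" using lpos by (auto simp: max_def split: if_splits)
  have PCD: "P = C \<union> D" "C \<inter> D = {}" "finite C" "finite D" using finP by (auto simp: C_def D_def)
  have "(\<Sum>x\<in>P. max lam (G x) * Q x - Aa x * ln (max lam (G x)))
      = (\<Sum>x\<in>C. max lam (G x) * Q x - Aa x * ln (max lam (G x)))
      + (\<Sum>x\<in>D. max lam (G x) * Q x - Aa x * ln (max lam (G x)))"
    using PCD by (simp add: sum.union_disjoint)
  also have "(\<Sum>x\<in>C. max lam (G x) * Q x - Aa x * ln (max lam (G x)))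
      = (\<Sum>x\<in>C. lam * Q x - Aa x * ln lam)"
    by (rule sum.cong) (auto dest: iC simp: max_def)
  also have "\<dots> = lam * (\<Sum>x\<in>C. Q x) - (\<Sum>x\<in>C. Aa x) * ln lam"
    by (simp add: sum_subtractf sum_distrib_left sum_distrib_right)
  also have "(\<Sum>x\<in>D. max lam (G x) * Q x - Aa x * ln (max lam (G x)))
      = (\<Sum>x\<in>D. G x * Q x - Aa x * ln (G x))"
    by (rule sum.cong) (auto dest: iD simp: max_def)
  finally show ?thesis using nz by (simp add: f_def algebra_simps)
qed

lemma M_nonneg: "z \<in> M \<Longrightarrow> z \<ge> 0"
proof -
  have "\<And>g. lt g \<ge> 0" unfolding lt_def using Qnn Apos eps
    by (intro divide_nonneg_nonneg sum_nonneg add_nonneg_nonneg) (auto intro: less_imp_le)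
  thus "z \<in> M \<Longrightarrow> z \<ge> 0" using Gnn by (auto simp: M_def)
qed

lemma M_finite: "finite M" using finP by (simp add: M_def)

lemma descent:
  assumes y: "y > 0" and yN: "y \<notin> G ` P"
  shows "\<exists>z\<in>M. f z \<le> f y \<and> (z \<noteq> y \<longrightarrow> f z < f y)"
proof -
  define C where "C = {x\<in>P. G x \<le> y}"
  define D where "D = {x\<in>P. \<not> G x \<le> y}"
  have finC: "finite C" and finD: "finite D" using finP by (auto simp: C_def D_def)
  have Cl: "\<And>x. x \<in> C \<Longrightarrow> G x < y" using yN by (force simp: C_def)
  show ?thesis
  proof (cases "C = {}")
    case True
    hence DP: "D = P" by (auto simp: C_def D_def)
    have GD: "\<And>x. x \<in> P \<Longrightarrow> G x > y" using True by (auto simp: C_def)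
    have nz: "\<And>lam. lam \<le> y \<Longrightarrow> \<not> (\<exists>x\<in>P. max lam (G x) = 0)"
      using GD y by (force simp: max_def)
    have mx: "\<And>lam x. lam \<le> y \<Longrightarrow> x \<in> P \<Longrightarrow> max lam (G x) = G x" using GD
      by (force simp: max_def)
    have "f 0 = ereal (\<Sum>x\<in>P. G x * Q x - Aa x * ln (G x))"
      using nz[of 0] y mx[of 0] by (simp add: f_def cong: sum.cong)
    moreover have "f y = ereal ((\<Sum>x\<in>P. G x * Q x - Aa x * ln (G x)) + \<epsilon> * y)"
      using nz[of y] mx[of y] by (simp add: f_def cong: sum.cong)
    ultimately have "f 0 < f y" using eps y by simp
    moreover have "0 \<in> M" by (simp add: M_def)
    ultimately show ?thesis using y by (intro bexI[of _ 0]) auto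
  next
    case False
    define g where "g = Max (G ` C)"
    have gC: "g \<in> G ` C" using False finC by (simp add: g_def)
    have gge: "\<And>x. x \<in> C \<Longrightarrow> G x \<le> g" using finC by (auto simp: g_def)
    have gy: "g < y" using gC Cl by auto
    have gP: "g \<in> G ` P" using gC by (auto simp: C_def)
    have Cset: "{x\<in>P. G x \<le> g} = C" using gge gy by (auto simp: C_def)
    define A where "A = (\<Sum>x\<in>C. Q x) + \<epsilon>"
    define B where "B = (\<Sum>x\<in>C. Aa x)"
    define K where "K = (\<Sum>x\<in>D. G x * Q x - Aa x * ln (G x))"
    have Apos': "A > 0" unfolding A_def using eps Qnn
      by (smt (verit, best) C_def mem_Collect_eq sum_nonneg)
    have Bpos: "B > 0" unfolding B_def using False finC Apos
      by (intro sum_pos) (auto simp: C_def)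
    have lt_g: "lt g = B / A" by (simp add: lt_def Cset A_def B_def)
    have ltM: "lt g \<in> M" using gP by (simp add: M_def)
    have GM: "\<And>x. x \<in> P \<Longrightarrow> G x \<in> M" by (simp add: M_def)
    have fform: "\<And>lam. lam > 0 \<Longrightarrow> (\<And>x. x \<in> C \<Longrightarrow> G x \<le> lam) \<Longrightarrow>
        (\<And>x. x \<in> D \<Longrightarrow> lam \<le> G x) \<Longrightarrow> f lam = ereal (A * lam - B * ln lam + K)"
      unfolding A_def B_def K_def C_def D_def using y by (intro formula) auto
    have fy: "f y = ereal (A * y - B * ln y + K)"
      using y Cl by (intro fform) (auto simp: D_def C_def)
    have p0: "B / A > 0" using Apos' Bpos by simp
    have fin: "\<exists>z\<in>M. z > 0 \<and> (\<forall>x\<in>C. G x \<le> z) \<and> (\<forall>x\<in>D. z \<le> G x) \<and>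
       ((B/A \<le> z \<and> z \<le> y) \<or> (y \<le> z \<and> z \<le> B/A))"
    proof (cases "B/A \<le> g")
      case True
      then show ?thesis using gP gge gy p0 GM
        by (intro bexI[of _ g]) (auto simp: D_def)
    next
      case g: False
      show ?thesis
      proof (cases "B/A \<le> y")
        case True
        have "\<forall>x\<in>C. G x \<le> B/A" using gge g by (meson order_trans nle_le)
        then show ?thesis using True g ltM lt_g p0 by (intro bexI[of _ "B/A"]) (auto simp: D_def)
      next
        case yp: False
        show ?thesis
        proof (cases "\<exists>x\<in>D. G x < B/A")
          case True
          define g' where "g' = Min (G ` D)"
          have "D \<noteq> {}" using True by auto
          hence g'D: "g' \<in> G ` D" using finD by (simp add: g'_def)
          have g'le: "\<And>x. x \<in> D \<Longrightarrow> g' \<le> G x" using finD by (auto simp: g'_def)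
          have "g' < B/A" using True g'le by force
          moreover have "y < g'" using g'D by (auto simp: D_def)
          moreover have "g' \<in> M" using g'D GM by (auto simp: D_def)
          ultimately show ?thesis using g'le Cl y
            by (intro bexI[of _ g']) (auto intro: less_imp_le less_le_trans)
        next
          case False
          have "\<forall>x\<in>C. G x \<le> B/A" using Cl yp by (meson less_imp_le less_le_trans not_le)
          then show ?thesis using False yp ltM lt_g p0 Cl
            by (intro bexI[of _ "B/A"]) (auto simp: not_less intro: less_imp_le less_le_trans)
        qed
      qed
    qed
    then obtain z where zM: "z \<in> M" and z0: "z > 0" and zC: "\<forall>x\<in>C. G x \<le> z"
      and zD: "\<forall>x\<in>D. z \<le> G x" and btw: "(B/A \<le> z \<and> z \<le> y) \<or> (y \<le> z \<and> z \<le> B/A)"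
      by blast
    have fz: "f z = ereal (A * z - B * ln z + K)" using z0 zC zD by (intro fform) auto
    have "A*z - B*ln z \<le> A*y - B*ln y" and "z \<noteq> y \<Longrightarrow> A*z - B*ln z < A*y - B*ln y"
      using core[OF Apos' Bpos y z0 btw] by auto
    then show ?thesis using zM fz fy by (intro bexI[of _ z]) auto
  qed
qed

lemma main:
  shows "(\<exists>lam. lam \<ge> 0 \<and> (\<forall>y\<ge>0. f lam \<le> f y)) \<and>
         (\<forall>lam. lam \<ge> 0 \<and> (\<forall>y\<ge>0. f lam \<le> f y) \<longrightarrow> lam \<in> M)"
proof
  have M0: "0 \<in> M" by (simp add: M_def)
  define m where "m = Min (f ` M)"
  have "m \<in> f ` M" using M_finite M0 unfolding m_def by (intro Min_in) auto
  then obtain z0 where z0: "z0 \<in> M" "f z0 = m" by auto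
  have mle: "\<And>z. z \<in> M \<Longrightarrow> f z0 \<le> f z" using M_finite z0 by (auto simp: m_def)
  show "\<exists>lam. lam \<ge> 0 \<and> (\<forall>y\<ge>0. f lam \<le> f y)"
  proof (intro exI conjI allI impI)
    show "z0 \<ge> 0" using z0 M_nonneg by auto
    fix y :: real assume y: "y \<ge> 0"
    show "f z0 \<le> f y"
    proof (cases "y \<in> M")
      case True then show ?thesis using mle by auto
    next
      case False
      hence "y > 0" "y \<notin> G ` P" using y M0 by (auto simp: M_def less_le)
      then obtain z where "z \<in> M" "f z \<le> f y" using descent by blast
      then show ?thesis using mle order_trans by blast
    qed
  qed
  show "\<forall>lam. lam \<ge> 0 \<and> (\<forall>y\<ge>0. f lam \<le> f y) \<longrightarrow> lam \<in> M"
  proof (intro allI impI)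
    fix lam :: real assume h: "lam \<ge> 0 \<and> (\<forall>y\<ge>0. f lam \<le> f y)"
    show "lam \<in> M"
    proof (rule ccontr)
      assume nM: "lam \<notin> M"
      hence "lam > 0" "lam \<notin> G ` P" using h M0 by (auto simp: M_def less_le)
      then obtain z where "z \<in> M" "z \<noteq> lam \<longrightarrow> f z < f lam" using descent by blast
      moreover have "f lam \<le> f z" using h M_nonneg \<open>z \<in> M\<close> by auto
      ultimately show False using nM by auto
    qed
  qed
qed
end

lemma qf_nonneg: "qf m2 n S h k j l \<ge> 0"
proof -
  let ?F = "(\<lambda>t. max (max \<bar>blk m2 (S t) h k j l\<bar> \<bar>blk m2 (S t) h l j k\<bar>)
                   (max \<bar>blk m2 (S t) j l h k\<bar> \<bar>blk m2 (S t) j k h l\<bar>))"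
  have "?F 0 \<le> Max (?F ` {0..n})" by (intro Max_ge) auto
  moreover have "?F 0 \<ge> 0" by simp
  ultimately show ?thesis unfolding qf_def by linarith
qed

lemma alpha_pos: "alpha n h k j l > 0"
  unfolding alpha_def by auto

lemma finite_pairs: "finite (pairs m2)"
proof -
  have "pairs m2 \<subseteq> {1..m2} \<times> {1..m2}" by (auto simp: pairs_def)
  thus ?thesis by (rule finite_subset) auto
qed

theorem proposition5:
  fixes m1 m2 n :: nat and S :: "nat \<Rightarrow> nat \<Rightarrow> nat \<Rightarrow> real"
    and h j :: nat and \<gamma> :: "nat \<Rightarrow> nat \<Rightarrow> real" and \<epsilon> :: real
  assumes "\<epsilon> > 0"
    and "in_Qplus (m1 * m2) n S"
    and "h \<in> {1..m1}" and "j \<in> {1..m1}" and "h \<ge> j"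
    and "\<forall>(k, l)\<in>pairs m2. \<gamma> k l \<ge> 0"
  shows "(\<exists>lam. is_minimizer (obj m2 n S h j \<gamma> \<epsilon>) lam) \<and>
         (\<forall>lam. is_minimizer (obj m2 n S h j \<gamma> \<epsilon>) lam \<longrightarrow>
               lam \<in> N1 m2 \<gamma> \<union> N2 m2 n S h j \<gamma> \<epsilon>)"
proof -
  have M: "(\<exists>lam. lam \<ge> 0 \<and> (\<forall>y\<ge>0. obj m2 n S h j \<gamma> \<epsilon> lam \<le> obj m2 n S h j \<gamma> \<epsilon> y)) \<and>
         (\<forall>lam. lam \<ge> 0 \<and> (\<forall>y\<ge>0. obj m2 n S h j \<gamma> \<epsilon> lam \<le> obj m2 n S h j \<gamma> \<epsilon> y) \<longrightarrow>
           lam \<in> N1 m2 \<gamma> \<union> N2 m2 n S h j \<gamma> \<epsilon>)"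
  proof (rule main[where P = "pairs m2" and G = "\<lambda>(k,l). \<gamma> k l"
        and Q = "\<lambda>(k,l). qf m2 n S h k j l" and Aa = "\<lambda>(k,l). alpha n h k j l"
        and \<epsilon> = \<epsilon> and lt = "lam_tilde m2 n S h j \<gamma> \<epsilon>"])
    show "finite (pairs m2)" by (rule finite_pairs)
    show "\<And>x. x \<in> pairs m2 \<Longrightarrow> 0 \<le> (case x of (k, l) \<Rightarrow> \<gamma> k l)" using assms(6) by auto
    show "\<And>x. x \<in> pairs m2 \<Longrightarrow> 0 \<le> (case x of (k, l) \<Rightarrow> qf m2 n S h k j l)"
      using qf_nonneg by (auto split: prod.splits)
    show "\<And>x. x \<in> pairs m2 \<Longrightarrow> 0 < (case x of (k, l) \<Rightarrow> alpha n h k j l)"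
      using alpha_pos by (auto split: prod.splits)
    show "0 < \<epsilon>" by fact
    show "\<And>lam. obj m2 n S h j \<gamma> \<epsilon> lam = (if \<exists>x\<in>pairs m2. max lam (case x of (k, l) \<Rightarrow> \<gamma> k l) = 0 then \<infinity>
        else ereal ((\<Sum>x\<in>pairs m2. max lam (case x of (k, l) \<Rightarrow> \<gamma> k l) * (case x of (k, l) \<Rightarrow> qf m2 n S h k j l)
           - (case x of (k, l) \<Rightarrow> alpha n h k j l) * ln (max lam (case x of (k, l) \<Rightarrow> \<gamma> k l))) + \<epsilon> * lam))"
      unfolding obj_def by (simp add: split_def)
    show "\<And>g. lam_tilde m2 n S h j \<gamma> \<epsilon> g =
        (\<Sum>x\<in>{x \<in> pairs m2. (case x of (k, l) \<Rightarrow> \<gamma> k l) \<le> g}. case x of (k, l) \<Rightarrow> alpha n h k j l) /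
        ((\<Sum>x\<in>{x \<in> pairs m2. (case x of (k, l) \<Rightarrow> \<gamma> k l) \<le> g}. case x of (k, l) \<Rightarrow> qf m2 n S h k j l) + \<epsilon>)"
      unfolding lam_tilde_def Cset_def by (simp add: split_def)
    show "N1 m2 \<gamma> \<union> N2 m2 n S h j \<gamma> \<epsilon> =
        (\<lambda>(k, l). \<gamma> k l) ` pairs m2 \<union> insert 0 (lam_tilde m2 n S h j \<gamma> \<epsilon> ` (\<lambda>(k, l). \<gamma> k l) ` pairs m2)"
      unfolding N1_def N2_def by simp
  qed
  then show ?thesis unfolding is_minimizer_def by blast
qed

end
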